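(* Let $G=(V,E)$ be an unweighted undirected graph on $n$ nodes and let $D\ge 2$ be an integer. Let $R$ be a random multiset of $\lceil 2\frac{n}{D}\ln D\rceil$ elements, each chosen uniformly and independently at random from $V$. For a node $u$, call a node $v$ uncovered for $u$ if $dist_G(u,v)\ge D$ and no node of $R$ lies on any shortest path between $u$ and $v$; call $u$ sick if it has more than $\frac{n}{D}$ uncovered nodes. Let $S$ be the set of sick nodes. Then \[ \Pr\!\left[|S|\ge 2\frac{n}{D}\right]\le \frac12. \]
   Context: $dist_G(u,v)$ denotes the shortest-path distance (number of edges) in $G$. A shortest path between $u$ and $v$ includes its endpoints $u$ and $v$. *)

theory Defs
  imports "HOL-Probability.Probability"
begin

definition is_walk :: "'a set \<Rightarrow> ('a \<Rightarrow> 'a \<Rightarrow> bool) \<Rightarrow> 'a list \<Rightarrow> bool" where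
  "is_walk V E p \<longleftrightarrow> p \<noteq> [] \<and> set p \<subseteq> V \<and>
     (\<forall>i. Suc i < length p \<longrightarrow> E (p ! i) (p ! Suc i))"

definition walk_between :: "'a set \<Rightarrow> ('a \<Rightarrow> 'a \<Rightarrow> bool) \<Rightarrow> 'a \<Rightarrow> 'a \<Rightarrow> 'a list \<Rightarrow> bool" where
  "walk_between V E u v p \<longleftrightarrow> is_walk V E p \<and> hd p = u \<and> last p = v"

definition reachable :: "'a set \<Rightarrow> ('a \<Rightarrow> 'a \<Rightarrow> bool) \<Rightarrow> 'a \<Rightarrow> 'a \<Rightarrow> bool" where
  "reachable V E u v \<longleftrightarrow> (\<exists>p. walk_between V E u v p)"

definition gdist :: "'a set \<Rightarrow> ('a \<Rightarrow> 'a \<Rightarrow> bool) \<Rightarrow> 'a \<Rightarrow> 'a \<Rightarrow> nat" where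
  "gdist V E u v = (LEAST d. \<exists>p. walk_between V E u v p \<and> length p = Suc d)"

definition shortest_path :: "'a set \<Rightarrow> ('a \<Rightarrow> 'a \<Rightarrow> bool) \<Rightarrow> 'a \<Rightarrow> 'a \<Rightarrow> 'a list \<Rightarrow> bool" where
  "shortest_path V E u v p \<longleftrightarrow> walk_between V E u v p \<and> length p = Suc (gdist V E u v)"

(* v is uncovered for u w.r.t. the sample R (a list, read as multiset) *)
definition uncovered :: "'a set \<Rightarrow> ('a \<Rightarrow> 'a \<Rightarrow> bool) \<Rightarrow> nat \<Rightarrow> 'a list \<Rightarrow> 'a \<Rightarrow> 'a set" where
  "uncovered V E D R u = {v \<in> V. reachable V E u v \<and> gdist V E u v \<ge> D \<and>
      (\<forall>p. shortest_path V E u v p \<longrightarrow> set p \<inter> set R = {})}"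

definition sick_nodes :: "'a set \<Rightarrow> ('a \<Rightarrow> 'a \<Rightarrow> bool) \<Rightarrow> nat \<Rightarrow> 'a list \<Rightarrow> 'a set" where
  "sick_nodes V E D R = {u \<in> V. real (card (uncovered V E D R u)) > real (card V) / real D}"

end

theory Submission imports Defs begin

lemma is_walk_single: "is_walk V E [x] \<longleftrightarrow> x \<in> V"
  by (auto simp: is_walk_def)

lemma is_walk_cons2: "is_walk V E (x#y#zs) \<longleftrightarrow> x \<in> V \<and> E x y \<and> is_walk V E (y#zs)"
proof
  assume h: "is_walk V E (x#y#zs)"
  have sv: "set (x#y#zs) \<subseteq> V" and st: "\<forall>i. Suc i < length (x#y#zs) \<longrightarrow> E ((x#y#zs) ! i) ((x#y#zs) ! Suc i)"
    using h unfolding is_walk_def by simp_all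
  have "E x y" using st[rule_format, of 0] by simp
  moreover have "is_walk V E (y#zs)" unfolding is_walk_def
  proof (intro conjI allI impI)
    show "set (y#zs) \<subseteq> V" using sv by simp
    fix i assume "Suc i < length (y#zs)"
    then show "E ((y#zs) ! i) ((y#zs) ! Suc i)" using st[rule_format, of "Suc i"] by simp
  qed simp
  moreover have "x \<in> V" using sv by simp
  ultimately show "x \<in> V \<and> E x y \<and> is_walk V E (y#zs)" by simp
next
  assume h: "x \<in> V \<and> E x y \<and> is_walk V E (y#zs)"
  show "is_walk V E (x#y#zs)" unfolding is_walk_def
  proof (intro conjI allI impI)
    show "set (x#y#zs) \<subseteq> V" using h by (auto simp: is_walk_def)
    fix i assume "Suc i < length (x#y#zs)"
    then show "E ((x#y#zs) ! i) ((x#y#zs) ! Suc i)" using h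
      by (cases i) (auto simp: is_walk_def)
  qed simp
qed


lemma is_walk_hd: "is_walk V E (y#zs) \<Longrightarrow> y \<in> V"
  by (auto simp: is_walk_def)

lemma is_walk_append: "is_walk V E (xs @ y # zs) \<longleftrightarrow> is_walk V E (xs @ [y]) \<and> is_walk V E (y # zs)"
proof (induction xs)
  case Nil
  then show ?case using is_walk_hd[of V E y zs] by (auto simp: is_walk_single)
next
  case (Cons a xs)
  note IH = Cons.IH
  show ?case
  proof (cases xs)
    case Nil
    then have "is_walk V E ((a # xs) @ y # zs) = (a \<in> V \<and> E a y \<and> is_walk V E (y#zs))"
      "is_walk V E ((a#xs)@[y]) = (a \<in> V \<and> E a y \<and> y \<in> V)"
      by (simp_all add: is_walk_cons2 is_walk_single)
    then show ?thesis using is_walk_hd[of V E y zs] by blast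
  next
    case (Cons b xs')
    have 1: "is_walk V E ((a # xs) @ y # zs) = (a \<in> V \<and> E a b \<and> is_walk V E (xs @ y # zs))"
      using Cons by (simp add: is_walk_cons2)
    have 2: "is_walk V E ((a # xs) @ [y]) = (a \<in> V \<and> E a b \<and> is_walk V E (xs @ [y]))"
      using Cons by (simp add: is_walk_cons2)
    show ?thesis unfolding 1 2 IH by (rule iffI) simp_all
  qed
qed

lemma walk_between_len: assumes "walk_between V E u v p" shows "\<exists>d. length p = Suc d"
  using assms by (cases p) (auto simp: walk_between_def is_walk_def)

lemma shortest_path_distinct:
  assumes "shortest_path V E u v p" shows "distinct p"
proof (rule ccontr)
  assume "\<not> distinct p"
  then obtain xs ys zs y where p: "p = xs@[y]@ys@[y]@zs" using not_distinct_decomp by blast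
  have w: "walk_between V E u v p" and l: "length p = Suc (gdist V E u v)"
    using assms by (auto simp: shortest_path_def)
  have iw: "is_walk V E (xs @ y # ys @ y # zs)" using w p by (simp add: walk_between_def)
  have A: "is_walk V E (xs @ [y])" "is_walk V E (y # ys @ y # zs)"
    using is_walk_append[of V E xs y "ys @ y # zs"] iw by simp_all
  have B: "is_walk V E (y # zs)"
    using is_walk_append[of V E "y#ys" y zs] A(2) by simp
  have w2: "is_walk V E (xs @ y # zs)" using is_walk_append[of V E xs y zs] A(1) B by simp
  have hp: "hd p = u" "last p = v" using w by (simp_all add: walk_between_def)
  have "hd (xs @ y # zs) = u" using hp(1) unfolding p by (cases xs) simp_all
  moreover have "last (xs @ y # zs) = v" using hp(2) unfolding p by (cases zs) simp_all
  ultimately have wb: "walk_between V E u v (xs @ y # zs)" using w2 by (simp add: walk_between_def)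
  define d where "d = length xs + length zs"
  have "length (xs @ y # zs) = Suc d" by (simp add: d_def)
  with wb have ex: "\<exists>q. walk_between V E u v q \<and> length q = Suc d" by blast
  have "d < gdist V E u v" using l p by (simp add: d_def)
  then have "d < (LEAST d. \<exists>p. walk_between V E u v p \<and> length p = Suc d)" by (simp add: gdist_def)
  then have "\<not> (\<exists>p. walk_between V E u v p \<and> length p = Suc d)" by (rule not_less_Least)
  with ex show False by blast
qed

lemma shortest_path_exists:
  assumes "reachable V E u v" shows "\<exists>p. shortest_path V E u v p"
proof -
  obtain p where w: "walk_between V E u v p" using assms reachable_def by metis
  obtain d where "length p = Suc d" using walk_between_len[OF w] by blast
  then have "\<exists>d q. walk_between V E u v q \<and> length q = Suc d" using w by blast
  then have "\<exists>q. walk_between V E u v q \<and> length q = Suc (gdist V E u v)"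
    unfolding gdist_def by (rule LeastI_ex)
  then show ?thesis by (auto simp: shortest_path_def)
qed


lemma emeas_miss:
  "emeasure (measure_pmf (replicate_pmf k p)) {R. set R \<inter> A = {}} = ennreal (measure_pmf.prob p (-A) ^ k)"
proof (induction k)
  case 0
  then show ?case by (simp add: measure_pmf.emeasure_eq_measure)
next
  case (Suc k)
  define q where "q = measure_pmf.prob p (-A)"
  have eq: "replicate_pmf (Suc k) p = bind_pmf p (\<lambda>x. map_pmf ((#) x) (replicate_pmf k p))"
    by (simp add: map_pmf_def)
  have pre: "\<And>x. ((#) x) -` {R. set R \<inter> A = {}} = (if x \<in> A then {} else {R. set R \<inter> A = {}})"
    by auto
  have "emeasure (measure_pmf (replicate_pmf (Suc k) p)) {R. set R \<inter> A = {}}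
     = (\<integral>\<^sup>+x. emeasure (measure_pmf (replicate_pmf k p)) (((#) x) -` {R. set R \<inter> A = {}}) \<partial>measure_pmf p)"
    by (simp only: eq emeasure_bind_pmf emeasure_map_pmf)
  also have "\<dots> = (\<integral>\<^sup>+x. ennreal (q ^ k) * indicator (-A) x \<partial>measure_pmf p)"
    using Suc.IH by (intro nn_integral_cong) (auto simp: pre q_def indicator_def)
  also have "\<dots> = ennreal (q ^ k) * emeasure (measure_pmf p) (-A)"
    by (rule nn_integral_cmult_indicator) simp
  also have "\<dots> = ennreal (q ^ Suc k)"
    by (simp add: measure_pmf.emeasure_eq_measure q_def ennreal_mult'' mult.commute)
  finally show ?case by (simp add: q_def)
qed

lemma prob_miss:
  "measure_pmf.prob (replicate_pmf k p) {R. set R \<inter> A = {}} = measure_pmf.prob p (-A) ^ k"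
  using emeas_miss[of k p A]
  by (simp add: measure_pmf.emeasure_eq_measure)

lemma sum_ind_card: "finite V \<Longrightarrow> (\<Sum>v\<in>V. indicator U v :: real) = real (card (V \<inter> U))"
  by (simp add: indicator_def sum.If_cases)

lemma exp_bound:
  fixes D n k :: nat and q :: real
  assumes "D \<ge> 2" "n > 0" "0 \<le> q" "q \<le> 1 - real D / real n"
    and "real k \<ge> 2 * (real n / real D) * ln (real D)"
  shows "q ^ k \<le> 1 / (real D)^2"
proof -
  have "q \<le> exp (- (real D / real n))" using assms(4) exp_ge_add_one_self[of "- (real D / real n)"] by linarith
  then have "q ^ k \<le> exp (- (real D / real n)) ^ k" using assms(3) by (intro power_mono) auto
  also have "\<dots> = exp (real k * (- (real D / real n)))" by (rule exp_of_nat_mult[symmetric])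
  also have "\<dots> \<le> exp (- (2 * ln (real D)))"
  proof -
    have "real k * (real D / real n) \<ge> 2 * (real n / real D) * ln (real D) * (real D / real n)"
      using assms(5) by (intro mult_right_mono) auto
    also have "2 * (real n / real D) * ln (real D) * (real D / real n) = 2 * ln (real D)"
      using assms(1,2) by (simp add: field_simps)
    finally show ?thesis by simp
  qed
  also have "\<dots> = 1 / (real D)^2"
  proof -
    have "ln ((real D)^2) = 2 * ln (real D)" using assms(1) by (simp add: ln_realpow)
    then have "exp (- (2 * ln (real D))) = exp (- ln ((real D)^2))" by simp
    also have "\<dots> = inverse (exp (ln ((real D)^2)))" by (simp add: exp_minus)
    also have "\<dots> = 1 / (real D)^2" using assms(1) by (simp add: field_simps)
    finally show ?thesis .
  qed
  finally show ?thesis .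
qed

theorem lemma3:
  fixes V :: "'a set" and E :: "'a \<Rightarrow> 'a \<Rightarrow> bool" and D n :: nat
  assumes "finite V" and "V \<noteq> {}" and "card V = n"
    and "\<And>x y. E x y \<Longrightarrow> x \<in> V \<and> y \<in> V"
    and "\<And>x y. E x y \<Longrightarrow> E y x"
    and "\<And>x. \<not> E x x"
    and "D \<ge> 2"
  shows "measure_pmf.prob
           (replicate_pmf (nat \<lceil>2 * (real n / real D) * ln (real D)\<rceil>) (pmf_of_set V))
           {R. real (card (sick_nodes V E D R)) \<ge> 2 * (real n / real D)} \<le> 1 / 2"
proof -
  define k where "k = nat \<lceil>2 * (real n / real D) * ln (real D)\<rceil>"
  define M where "M = replicate_pmf k (pmf_of_set V)"
  have "card V > 0" using assms(1,2) by (simp add: card_gt_0_iff)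
  then have n0: "n > 0" using assms(3) by simp
  have D0: "real D > 0" using assms(7) by simp
  have kge: "real k \<ge> 2 * (real n / real D) * ln (real D)" unfolding k_def by (rule real_nat_ceiling_ge)
  have finM: "finite (set_pmf M)"
  proof -
    have "set_pmf M = {xs \<in> lists V. length xs = k}"
      unfolding M_def using assms(1,2) by (simp add: set_replicate_pmf)
    also have "\<dots> = {xs. set xs \<subseteq> V \<and> length xs = k}" by auto
    finally show ?thesis using finite_lists_length_eq[OF assms(1)] by simp
  qed
  have intM: "\<And>f::'a list \<Rightarrow> real. integrable (measure_pmf M) f"
    using finM by (rule integrable_measure_pmf_finite)
  have pair: "measure_pmf.prob M {R. v \<in> uncovered V E D R u} \<le> 1 / (real D)^2" for u v
  proof (cases "v \<in> V \<and> reachable V E u v \<and> gdist V E u v \<ge> D")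
    case True
    then obtain p where sp: "shortest_path V E u v p" using shortest_path_exists[of V E u v] by blast
    have dp: "distinct p" using sp by (rule shortest_path_distinct)
    have pV: "set p \<subseteq> V" using sp by (simp add: shortest_path_def walk_between_def is_walk_def)
    have cp: "card (set p) = Suc (gdist V E u v)" using sp dp
      by (simp add: shortest_path_def distinct_card)
    have cD: "card (set p) \<ge> D" using cp True by simp
    have cn: "card (set p) \<le> n" using card_mono[OF assms(1) pV] assms(3) by simp
    have sub: "{R. v \<in> uncovered V E D R u} \<subseteq> {R. set R \<inter> set p = {}}"
      using sp by (auto simp: uncovered_def)
    define q where "q = measure_pmf.prob (pmf_of_set V) (- set p)"
    have "q = real (card (V \<inter> - set p)) / real (card V)"
      unfolding q_def using assms(1,2) by (simp add: measure_pmf_of_set)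
    also have "V \<inter> - set p = V - set p" by auto
    also have "card (V - set p) = n - card (set p)"
      using card_Diff_subset[OF _ pV] assms(3) by simp
    finally have qe: "q = real (n - card (set p)) / real n" using assms(3) by simp
    have q0: "0 \<le> q" by (simp add: q_def)
    have q1: "q \<le> 1 - real D / real n"
    proof -
      have "q = (real n - real (card (set p))) / real n" using qe cn by (simp add: of_nat_diff)
      also have "\<dots> = 1 - real (card (set p)) / real n" using n0 by (simp add: field_simps)
      also have "\<dots> \<le> 1 - real D / real n" using cD n0 by (simp add: divide_right_mono)
      finally show ?thesis .
    qed
    have "measure_pmf.prob M {R. v \<in> uncovered V E D R u} \<le> measure_pmf.prob M {R. set R \<inter> set p = {}}"
      using sub by (intro measure_pmf.finite_measure_mono) auto
    also have "\<dots> = q ^ k" unfolding M_def q_def by (rule prob_miss)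
    also have "\<dots> \<le> 1 / (real D)^2" using exp_bound[OF assms(7) n0 q0 q1 kge] .
    finally show ?thesis .
  next
    case False
    then have "{R. v \<in> uncovered V E D R u} = {}" by (auto simp: uncovered_def)
    then show ?thesis by simp
  qed
  define F where "F = (\<lambda>R. \<Sum>u\<in>V. \<Sum>v\<in>V. indicator {R. v \<in> uncovered V E D R u} R :: real)"
  have cardU: "real (card (uncovered V E D R u)) = (\<Sum>v\<in>V. indicator {R. v \<in> uncovered V E D R u} R)" for R u
  proof -
    have "(\<Sum>v\<in>V. indicator {R. v \<in> uncovered V E D R u} R) = (\<Sum>v\<in>V. indicator (uncovered V E D R u) v :: real)"
      by (intro sum.cong) (auto simp: indicator_def)
    also have "\<dots> = real (card (V \<inter> uncovered V E D R u))" using assms(1) by (rule sum_ind_card)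
    also have "V \<inter> uncovered V E D R u = uncovered V E D R u" by (auto simp: uncovered_def)
    finally show ?thesis by simp
  qed
  have ptw: "real (card (sick_nodes V E D R)) \<le> real D / real n * F R" for R
  proof -
    have sV: "sick_nodes V E D R \<subseteq> V" by (auto simp: sick_nodes_def)
    have "real (card (sick_nodes V E D R)) = (\<Sum>u\<in>sick_nodes V E D R. 1)" by simp
    also have "\<dots> \<le> (\<Sum>u\<in>sick_nodes V E D R. real D / real n * real (card (uncovered V E D R u)))"
    proof (intro sum_mono)
      fix u assume "u \<in> sick_nodes V E D R"
      then have "real (card (uncovered V E D R u)) > real n / real D" using assms(3) by (simp add: sick_nodes_def)
      then have "real D / real n * real (card (uncovered V E D R u)) > real D / real n * (real n / real D)"
        using D0 n0 by (intro mult_strict_left_mono) auto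
      then show "1 \<le> real D / real n * real (card (uncovered V E D R u))" using D0 n0 by simp
    qed
    also have "\<dots> \<le> (\<Sum>u\<in>V. real D / real n * real (card (uncovered V E D R u)))"
      using sV assms(1) by (intro sum_mono2) auto
    also have "\<dots> = real D / real n * F R" unfolding F_def by (simp add: sum_distrib_left cardU)
    finally show ?thesis .
  qed
  have EF: "measure_pmf.expectation M F \<le> real n * real n / (real D)^2"
  proof -
    have "measure_pmf.expectation M F = (\<Sum>u\<in>V. \<Sum>v\<in>V. measure_pmf.expectation M (indicator {R. v \<in> uncovered V E D R u}))"
      unfolding F_def using intM by (simp add: Bochner_Integration.integral_sum)
    also have "\<dots> = (\<Sum>u\<in>V. \<Sum>v\<in>V. measure_pmf.prob M {R. v \<in> uncovered V E D R u})" by simp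
    also have "\<dots> \<le> (\<Sum>u\<in>V. \<Sum>v\<in>V. 1 / (real D)^2)" using pair by (intro sum_mono) auto
    also have "\<dots> = real n * real n / (real D)^2" using assms(3) by simp
    finally show ?thesis .
  qed
  have ES: "measure_pmf.expectation M (\<lambda>R. real (card (sick_nodes V E D R))) \<le> real n / real D"
  proof -
    have "measure_pmf.expectation M (\<lambda>R. real (card (sick_nodes V E D R))) \<le> measure_pmf.expectation M (\<lambda>R. real D / real n * F R)"
      using intM ptw by (intro integral_mono) auto
    also have "\<dots> = real D / real n * measure_pmf.expectation M F" by simp
    also have "\<dots> \<le> real D / real n * (real n * real n / (real D)^2)"
      using EF D0 n0 by (intro mult_left_mono) auto
    also have "\<dots> = real n / real D" using D0 n0 by (simp add: field_simps power2_eq_square)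
    finally show ?thesis .
  qed
  have c0: "0 < 2 * (real n / real D)" using D0 n0 by simp
  have "measure_pmf.prob M {R \<in> space (measure_pmf M). real (card (sick_nodes V E D R)) \<ge> 2 * (real n / real D)}
      \<le> measure_pmf.expectation M (\<lambda>R. real (card (sick_nodes V E D R))) / (2 * (real n / real D))"
    using intM c0 by (intro integral_Markov_inequality_measure[where A = "{}"]) auto
  also have "\<dots> \<le> (real n / real D) / (2 * (real n / real D))"
    using ES c0 by (intro divide_right_mono) auto
  also have "\<dots> = 1 / 2" using D0 n0 by (simp add: field_simps)
  finally show ?thesis unfolding M_def k_def by simp
qed

end
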